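(* Let $F$ be a distribution function whose hazard rate $h$ satisfies (H) and is regularly varying of index $-1$. Then for all positive numbers $a,b,c$, $$\overline F(t/a)\,\overline F(t/b)=o\big(\overline F(t/c)\big)\qquad(t\to\infty),$$ i.e. $\overline{\mathsf M_aF}\,\overline{\mathsf M_bF}=o(\overline{\mathsf M_cF})$.
   Context: For a distribution function $F$, $\overline F=1-F$, and for $c>0$, $\mathsf M_cF$ is the distribution of $cY$ with $Y\sim F$, so $\overline{\mathsf M_cF}(t)=\overline F(t/c)$. The hazard rate is $h=F'/\overline F$, assumed to exist for all large $t$, so that $\overline F(t)=\overline F(t_0)\exp(-\int_{t_0}^th(u)\,du)$. Condition (H): $h$ is regularly varying, $\lim_{t\to\infty}th(t)=+\infty$, $\lim_{t\to\infty}h(t)=0$. *)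

theory Defs
  imports "HOL-Analysis.Analysis" "HOL-Library.Landau_Symbols"
begin

definition distribution_function :: "(real \<Rightarrow> real) \<Rightarrow> bool" where
  "distribution_function F \<longleftrightarrow>
     mono F \<and> (\<forall>x. continuous (at_right x) F) \<and>
     (F \<longlongrightarrow> 0) at_bot \<and> (F \<longlongrightarrow> 1) at_top"

definition tail :: "(real \<Rightarrow> real) \<Rightarrow> real \<Rightarrow> real" where
  "tail F t = 1 - F t"

text \<open>M_c F: the distribution of c Y for Y ~ F (c > 0), i.e. (M_c F)(t) = F(t/c).\<close>
definition scale_dist :: "real \<Rightarrow> (real \<Rightarrow> real) \<Rightarrow> real \<Rightarrow> real" where
  "scale_dist c F t = F (t / c)"

definition hazard_rate :: "(real \<Rightarrow> real) \<Rightarrow> (real \<Rightarrow> real) \<Rightarrow> bool" where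
  "hazard_rate F h \<longleftrightarrow>
     (\<exists>t0. \<forall>t\<ge>t0. tail F t > 0 \<and> (F has_real_derivative (h t * tail F t)) (at t))"

definition regularly_varying :: "real \<Rightarrow> (real \<Rightarrow> real) \<Rightarrow> bool" where
  "regularly_varying \<rho> h \<longleftrightarrow>
     eventually (\<lambda>t. h t > 0) at_top \<and>
     (\<forall>s>0. ((\<lambda>t. h (s * t) / h t) \<longlongrightarrow> s powr \<rho>) at_top)"

definition cond_H :: "(real \<Rightarrow> real) \<Rightarrow> bool" where
  "cond_H h \<longleftrightarrow> (\<exists>\<rho>. regularly_varying \<rho> h) \<and>
     filterlim (\<lambda>t. t * h t) at_top at_top \<and> (h \<longlongrightarrow> 0) at_top"

end

theory Submission
  imports Defs
begin

lemma key_incr: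
  fixes g h :: "real \<Rightarrow> real" and t0 lam s :: real
  assumes derA: "\<forall>t\<ge>t0. (g has_real_derivative h t) (at t)"
    and hpos: "eventually (\<lambda>t. h t > 0) at_top"
    and lim: "((\<lambda>t. h (lam * t) / h t) \<longlongrightarrow> lam powr (-1)) at_top"
    and lam: "lam > 0" and s: "s > 1"
  shows "eventually (\<lambda>x. (g (s * x) - g x) / 2 \<le> g (lam * (s * x)) - g (lam * x)) at_top"
proof -
  have der: "(g has_real_derivative h t) (at t)" if "t \<ge> t0" for t using derA that by blast
  have "((\<lambda>t. lam * (h (lam * t) / h t)) \<longlongrightarrow> lam * lam powr (-1)) at_top"
    by (intro tendsto_mult tendsto_const lim)
  moreover have "lam * lam powr (-1) = 1" using lam by (simp add: powr_minus field_simps)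
  ultimately have "((\<lambda>t. lam * (h (lam * t) / h t)) \<longlongrightarrow> 1) at_top" by simp
  hence "eventually (\<lambda>t. lam * (h (lam * t) / h t) > 1/2) at_top"
    by (rule order_tendstoD) simp
  with hpos have "eventually (\<lambda>t. lam * h (lam * t) - h t / 2 > 0) at_top"
  proof eventually_elim
    case (elim t)
    hence "lam * h (lam * t) > h t / 2" by (simp add: field_simps)
    thus ?case by simp
  qed
  then obtain T where T: "\<And>t. t \<ge> T \<Longrightarrow> lam * h (lam * t) - h t / 2 > 0"
    by (auto simp: eventually_at_top_linorder)
  have "eventually (\<lambda>x. x \<ge> max T (max t0 (max (t0 / lam) 1))) at_top"
    by (rule eventually_ge_at_top)
  thus ?thesis
  proof eventually_elim
    case (elim x)
    have xs: "x < s * x" using elim s by simp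
    have "(\<lambda>y. g (lam * y) - g y / 2) x < (\<lambda>y. g (lam * y) - g y / 2) (s * x)"
    proof (rule DERIV_pos_imp_increasing[OF xs])
      fix y assume y: "x \<le> y" "y \<le> s * x"
      have y0: "y \<ge> t0" "y \<ge> T" using y elim by auto
      have "t0 / lam \<le> y" using y elim by auto
      hence ly: "lam * y \<ge> t0" using lam by (simp add: field_simps)
      have d1: "((\<lambda>y. g (lam * y)) has_real_derivative h (lam * y) * lam) (at y)"
        apply (rule DERIV_chain2[where f=g and g="\<lambda>y. lam * y"])
        using der[OF ly] apply simp
        by (auto intro!: derivative_eq_intros)
      have "((\<lambda>y. g (lam * y) - g y / 2) has_real_derivative h (lam * y) * lam - h y / 2) (at y)"
        by (intro DERIV_diff DERIV_cdivide d1 der[OF y0(1)])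
      moreover have "h (lam * y) * lam - h y / 2 > 0" using T[OF y0(2)] by (simp add: mult.commute)
      ultimately show "\<exists>d. ((\<lambda>y. g (lam * y) - g y / 2) has_real_derivative d) (at y) \<and> d > 0"
        by blast
    qed
    thus ?case by (simp add: field_simps)
  qed
qed

theorem lemma4p3p1:
  fixes F h :: "real \<Rightarrow> real" and a b c :: real
  assumes "distribution_function F"
    and "hazard_rate F h"
    and "cond_H h"
    and "regularly_varying (-1) h"
    and "a > 0" and "b > 0" and "c > 0"
  shows "(\<lambda>t. tail (scale_dist a F) t * tail (scale_dist b F) t)
           \<in> o[at_top](tail (scale_dist c F))"
proof -
  obtain t0 where t0: "\<And>t. t \<ge> t0 \<Longrightarrow> tail F t > 0 \<and> (F has_real_derivative (h t * tail F t)) (at t)"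
    using assms(2) unfolding hazard_rate_def by blast
  have Fmono: "mono F" and Fbot: "(F \<longlongrightarrow> 0) at_bot" and Ftop: "(F \<longlongrightarrow> 1) at_top"
    using assms(1) unfolding distribution_function_def by auto
  have hpos: "eventually (\<lambda>t. h t > 0) at_top"
    and hlim: "\<And>s. s > 0 \<Longrightarrow> ((\<lambda>t. h (s * t) / h t) \<longlongrightarrow> s powr (-1)) at_top"
    using assms(4) unfolding regularly_varying_def by auto
  have F0: "F t \<ge> 0" for t
  proof (rule tendsto_le[OF trivial_limit_at_bot_linorder tendsto_const Fbot])
    show "eventually (\<lambda>x. F x \<le> F t) at_bot"
      unfolding eventually_at_bot_linorder using Fmono by (auto simp: mono_def)
  qed
  have F1: "F t \<le> 1" for t
  proof (rule tendsto_le[OF trivial_limit_at_top_linorder Ftop tendsto_const])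
    show "eventually (\<lambda>x. F t \<le> F x) at_top"
      unfolding eventually_at_top_linorder using Fmono by (auto simp: mono_def)
  qed
  have tail0: "tail F t \<ge> 0" for t using F1[of t] by (simp add: tail_def)
  have tailmono: "x \<le> y \<Longrightarrow> tail F y \<le> tail F x" for x y
    using Fmono by (auto simp: tail_def mono_def)
  have taillim: "(tail F \<longlongrightarrow> 0) at_top"
  proof -
    have "((\<lambda>t. 1 - F t) \<longlongrightarrow> 1 - 1) at_top" by (intro tendsto_diff tendsto_const Ftop)
    thus ?thesis by (simp add: tail_def[abs_def])
  qed
  define g where "g t = - ln (tail F t)" for t
  have der: "(g has_real_derivative h t) (at t)" if "t \<ge> t0" for t
  proof -
    from t0[OF that] have p: "tail F t > 0" and d: "(F has_real_derivative (h t * tail F t)) (at t)" by auto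
    have d': "(F has_real_derivative (h t * (1 - F t))) (at t)" using d by (simp add: tail_def)
    have "((\<lambda>t. - ln (1 - F t)) has_real_derivative h t) (at t)"
      using p by (auto intro!: derivative_eq_intros d' simp: tail_def)
    thus ?thesis by (simp add: g_def[abs_def] tail_def)
  qed
  have derA: "\<forall>t\<ge>t0. (g has_real_derivative h t) (at t)" using der by blast
  have texp: "t \<ge> t0 \<Longrightarrow> tail F t = exp (- g t)" for t
    using t0[of t] by (simp add: g_def)
  have ts: "tail (scale_dist d F) t = tail F (t / d)" for d t by (simp add: tail_def scale_dist_def)
  have fl: "filterlim (\<lambda>t. k * t) at_top at_top" if "k > 0" for k :: real
    by (rule filterlim_tendsto_pos_mult_at_top[OF tendsto_const that filterlim_ident])
  have flk: "((\<lambda>t. tail F (k * t)) \<longlongrightarrow> 0) at_top" if "k > 0" for k :: real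
    using filterlim_compose[OF taillim fl[OF that]] by simp
  have ev: "eventually (\<lambda>t. t \<ge> M) at_top" for M :: real by (rule eventually_ge_at_top)
  define R where "R t = tail F (t / a) * tail F (t / b) / tail F (t / c)" for t
  have R0: "R t \<ge> 0" for t unfolding R_def using tail0 by simp
  obtain k where k: "k > 0" "eventually (\<lambda>t. R t \<le> tail F (k * t)) at_top"
  proof (cases "a \<le> c")
    case True
    have "eventually (\<lambda>t. R t \<le> tail F ((1/b) * t)) at_top"
      using ev[of "max 0 (c * t0)"]
    proof eventually_elim
      case (elim t)
      have "t / c \<ge> t0" using elim assms by (simp add: field_simps)
      hence p: "tail F (t / c) > 0" using t0 by blast
      have "t / c \<le> t / a" using True elim assms by (simp add: frac_le)
      hence "tail F (t / a) \<le> tail F (t / c)" by (rule tailmono)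
      hence "tail F (t / a) * tail F (t / b) \<le> tail F (t / c) * tail F (t / b)"
        using tail0 by (intro mult_right_mono) auto
      hence "R t \<le> tail F (t / b)" using p unfolding R_def by (simp add: divide_le_eq mult.commute)
      thus ?case by simp
    qed
    thus ?thesis using that[of "1/b"] assms by simp
  next
    case False
    define s where "s = a / c"
    have s1: "s > 1" using False assms by (simp add: s_def)
    have flA: "filterlim (\<lambda>t. t / a) at_top at_top" using fl[of "1/a"] assms by simp
    have lc1: "c / b > 0" using assms by simp
    have lc2: "c * c / (a * b) > 0" using assms by simp
    define k where "k = c * c / (a * a * b)"
    have kp: "k > 0" using assms by (simp add: k_def)
    note E1 = eventually_compose_filterlim[OF key_incr[OF derA hpos hlim[OF lc1] lc1 s1] flA]
    note E2 = eventually_compose_filterlim[OF key_incr[OF derA hpos hlim[OF lc2] lc2 s1] flA]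
    have "eventually (\<lambda>t. R t \<le> tail F (k * t)) at_top"
      using E1 E2 ev[of "max 0 (max (a*t0) (max (b*t0) (max (c*t0) (t0/k))))"]
    proof eventually_elim
      case (elim t)
      have q1: "s * (t / a) = t / c" using assms by (simp add: s_def field_simps)
      have q2: "c / b * (t / c) = t / b" using assms by (simp add: s_def field_simps)
      have q3: "c / b * (t / a) = c * t / (a * b)" using assms by (simp add: field_simps)
      have q4: "c * c / (a * b) * (t / c) = c * t / (a * b)" using assms by (simp add: s_def field_simps)
      have q5: "c * c / (a * b) * (t / a) = k * t" using assms by (simp add: k_def field_simps)
      have i1: "(g (t / c) - g (t / a)) / 2 \<le> g (t / b) - g (c * t / (a * b))"
        using elim(1) by (simp only: q1 q2 q3)
      have i2: "(g (t / c) - g (t / a)) / 2 \<le> g (c * t / (a * b)) - g (k * t)"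
        using elim(2) by (simp only: q1 q4 q5)
      have ineq: "g (t / c) - g (t / a) - g (t / b) \<le> - g (k * t)" using i1 i2 by simp
      have ta: "t / a \<ge> t0" using elim(3) assms by (simp add: field_simps)
      have tb: "t / b \<ge> t0" using elim(3) assms by (simp add: field_simps)
      have tc: "t / c \<ge> t0" using elim(3) assms by (simp add: field_simps)
      have tk: "k * t \<ge> t0" using elim(3) kp by (simp add: field_simps)
      have "R t = exp (g (t / c) - g (t / a) - g (t / b))"
        unfolding R_def texp[OF ta] texp[OF tb] texp[OF tc] by (simp add: exp_diff exp_minus exp_add field_simps)
      also have "\<dots> \<le> exp (- g (k * t))" using ineq by simp
      also have "\<dots> = tail F (k * t)" using texp[OF tk] by simp
      finally show ?case .
    qed
    thus ?thesis using that kp by blast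
  qed
  have "(R \<longlongrightarrow> 0) at_top"
    by (rule tendsto_sandwich[OF _ k(2) tendsto_const flk[OF k(1)]]) (simp add: R0)
  moreover have "eventually (\<lambda>t. tail (scale_dist c F) t \<noteq> 0) at_top"
    using ev[of "max 0 (c * t0)"]
  proof eventually_elim
    case (elim t)
    have "t / c \<ge> t0" using elim assms by (simp add: field_simps)
    thus ?case using t0 ts by (metis less_irrefl)
  qed
  ultimately show ?thesis
    unfolding ts by (intro smalloI_tendsto) (simp_all add: R_def[abs_def])
qed

end
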